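(* Let $f\in\mathbb{R}[x_1,\dots,x_n]$ be a homogeneous polynomial of degree $3$ that is $\lambda$-bounded for some $\lambda>0$. Then $\max_{\|v\|=1} f(v)\le \lambda$, and moreover every degree-$4$ pseudo-expectation $\tilde{\mathbb{E}}$ on $\mathbb{R}[x]_{\le 4}$ satisfies $$\tilde{\mathbb{E}}\, f(x)\;\le\;\lambda\cdot\big(\tilde{\mathbb{E}}\,\|x\|^4\big)^{3/4}.$$
   Context: A degree-$d$ pseudo-expectation ($d$ even) is a linear functional $\tilde{\mathbb{E}}:\mathbb{R}[x]_{\le d}\to\mathbb{R}$ with $\tilde{\mathbb{E}}\,1=1$ and $\tilde{\mathbb{E}}\,p(x)^2\ge 0$ for every polynomial $p$ of degree at most $d/2$. A matrix $M\in\mathbb{R}^{n^2\times n^2}$ is a matrix representation of the homogeneous quartic $\|x\|^4$ if $\langle x^{\otimes 2}, M x^{\otimes 2}\rangle=\|x\|^4$ as polynomials. A homogeneous cubic $f$ is called $\lambda$-bounded if there exist matrices $A_1,\dots,A_n\in\mathbb{R}^{n\times n}$ with $f(x)=\sum_{i=1}^n x_i\langle x,A_i x\rangle$ and a matrix representation $M$ of $\|x\|^4$ such that $\sum_i A_i\otimes A_i\preceq \lambda^2 M$, i.e. $\langle u,(\lambda^2M-\sum_iA_i\otimes A_i)u\rangle\ge 0$ for all $u\in\mathbb{R}^{n^2}$. *)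

theory Defs
  imports "HOL-Analysis.Analysis"
begin

text \<open>Polynomials in n real variables (n = CARD('n)) are represented by the
functions real^'n => real they define (over the reals the coefficient vector is
determined by the function).\<close>

definition monomial_fun :: "('n::finite \<Rightarrow> nat) \<Rightarrow> real^'n \<Rightarrow> real" where
  "monomial_fun \<alpha> = (\<lambda>x. \<Prod>i\<in>UNIV. (x $ i) ^ (\<alpha> i))"

definition exps_le :: "nat \<Rightarrow> ('n::finite \<Rightarrow> nat) set" where
  "exps_le d = {\<alpha>. (\<Sum>i\<in>UNIV. \<alpha> i) \<le> d}"

definition exps_eq :: "nat \<Rightarrow> ('n::finite \<Rightarrow> nat) set" where
  "exps_eq d = {\<alpha>. (\<Sum>i\<in>UNIV. \<alpha> i) = d}"

definition poly_le :: "nat \<Rightarrow> (real^'n::finite \<Rightarrow> real) \<Rightarrow> bool" where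
  "poly_le d p \<longleftrightarrow> (\<exists>c. p = (\<lambda>x. \<Sum>\<alpha>\<in>exps_le d. c \<alpha> * monomial_fun \<alpha> x))"

definition homog_poly :: "nat \<Rightarrow> (real^'n::finite \<Rightarrow> real) \<Rightarrow> bool" where
  "homog_poly d p \<longleftrightarrow> (\<exists>c. p = (\<lambda>x. \<Sum>\<alpha>\<in>exps_eq d. c \<alpha> * monomial_fun \<alpha> x))"

definition pseudo_expectation :: "nat \<Rightarrow> ((real^'n::finite \<Rightarrow> real) \<Rightarrow> real) \<Rightarrow> bool" where
  "pseudo_expectation d E \<longleftrightarrow>
     even d \<and>
     (\<forall>p q. poly_le d p \<longrightarrow> poly_le d q \<longrightarrow> E (\<lambda>x. p x + q x) = E p + E q) \<and>
     (\<forall>p c. poly_le d p \<longrightarrow> E (\<lambda>x. c * p x) = c * E p) \<and>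
     E (\<lambda>x. 1) = 1 \<and>
     (\<forall>p. poly_le (d div 2) p \<longrightarrow> E (\<lambda>x. (p x)^2) \<ge> 0)"

definition tensor2 :: "real^'n::finite \<Rightarrow> real^('n \<times> 'n)" where
  "tensor2 x = (\<chi> p. x $ fst p * x $ snd p)"

definition kron :: "real^'n^'n \<Rightarrow> real^'n^'n \<Rightarrow> real^('n::finite \<times> 'n)^('n \<times> 'n)" where
  "kron A B = (\<chi> p q. A $ fst p $ fst q * B $ snd p $ snd q)"

definition matrix_rep_norm4 :: "real^('n::finite \<times> 'n)^('n \<times> 'n) \<Rightarrow> bool" where
  "matrix_rep_norm4 M \<longleftrightarrow> (\<forall>x::real^'n. tensor2 x \<bullet> (M *v tensor2 x) = (norm x)^4)"

definition lambda_bounded :: "real \<Rightarrow> (real^'n::finite \<Rightarrow> real) \<Rightarrow> bool" where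
  "lambda_bounded lam f \<longleftrightarrow>
     (\<exists>(A :: 'n \<Rightarrow> real^'n^'n) (M :: real^('n \<times> 'n)^('n \<times> 'n)).
        (\<forall>x. f x = (\<Sum>i\<in>UNIV. x $ i * (x \<bullet> (A i *v x)))) \<and>
        matrix_rep_norm4 M \<and>
        (\<forall>u. u \<bullet> ((lam^2 *\<^sub>R M - (\<Sum>i\<in>UNIV. kron (A i) (A i))) *v u) \<ge> 0))"

end

theory Submission
  imports Defs
begin

lemma finite_exps_le: "finite (exps_le d :: ('n::finite \<Rightarrow> nat) set)"
proof -
  have "exps_le d \<subseteq> (PiE (UNIV::'n set) (\<lambda>_. {..d}))"
  proof
    fix \<alpha> :: "'n \<Rightarrow> nat" assume "\<alpha> \<in> exps_le d"
    then have "(\<Sum>i\<in>UNIV. \<alpha> i) \<le> d" by (simp add: exps_le_def)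
    moreover have "\<And>j. \<alpha> j \<le> (\<Sum>i\<in>UNIV. \<alpha> i)" by (rule member_le_sum) auto
    ultimately show "\<alpha> \<in> (PiE (UNIV::'n set) (\<lambda>_. {..d}))"
      by (auto simp: PiE_def extensional_def intro: order_trans)
  qed
  moreover have "finite (PiE (UNIV::'n set) (\<lambda>_. {..d}))" by (rule finite_PiE) auto
  ultimately show ?thesis by (rule finite_subset)
qed

lemma poly_le_subset:
  assumes "finite T" "T \<subseteq> exps_le d"
  shows "poly_le d (\<lambda>x::real^'n::finite. \<Sum>\<alpha>\<in>T. c \<alpha> * monomial_fun \<alpha> x)"
proof -
  define c' where "c' \<alpha> = (if \<alpha> \<in> T then c \<alpha> else 0)" for \<alpha>
  have "(\<lambda>x::real^'n. \<Sum>\<alpha>\<in>T. c \<alpha> * monomial_fun \<alpha> x) = (\<lambda>x. \<Sum>\<alpha>\<in>exps_le d. c' \<alpha> * monomial_fun \<alpha> x)"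
  proof
    fix x :: "real^'n"
    show "(\<Sum>\<alpha>\<in>T. c \<alpha> * monomial_fun \<alpha> x) = (\<Sum>\<alpha>\<in>exps_le d. c' \<alpha> * monomial_fun \<alpha> x)"
      by (rule sum.mono_neutral_cong_left) (use assms finite_exps_le in \<open>auto simp: c'_def\<close>)
  qed
  then show ?thesis unfolding poly_le_def by blast
qed

lemma poly_le_add:
  assumes "poly_le d p" "poly_le d q"
  shows "poly_le d (\<lambda>x. p x + q x)"
proof -
  obtain c where c: "p = (\<lambda>x. \<Sum>\<alpha>\<in>exps_le d. c \<alpha> * monomial_fun \<alpha> x)" using assms(1) poly_le_def by blast
  obtain e where e: "q = (\<lambda>x. \<Sum>\<alpha>\<in>exps_le d. e \<alpha> * monomial_fun \<alpha> x)" using assms(2) poly_le_def by blast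
  have "(\<lambda>x. p x + q x) = (\<lambda>x. \<Sum>\<alpha>\<in>exps_le d. (c \<alpha> + e \<alpha>) * monomial_fun \<alpha> x)"
    by (simp add: c e sum.distrib distrib_right)
  then show ?thesis unfolding poly_le_def by (intro exI[where x="\<lambda>\<alpha>. c \<alpha> + e \<alpha>"])
qed

lemma poly_le_scale:
  assumes "poly_le d p"
  shows "poly_le d (\<lambda>x. a * p x)"
proof -
  obtain c where c: "p = (\<lambda>x. \<Sum>\<alpha>\<in>exps_le d. c \<alpha> * monomial_fun \<alpha> x)" using assms(1) poly_le_def by blast
  have "(\<lambda>x. a * p x) = (\<lambda>x. \<Sum>\<alpha>\<in>exps_le d. (a * c \<alpha>) * monomial_fun \<alpha> x)"
    by (simp add: c sum_distrib_left mult.assoc)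
  then show ?thesis unfolding poly_le_def by (intro exI[where x="\<lambda>\<alpha>. a * c \<alpha>"])
qed

lemma poly_le_mono:
  assumes "poly_le a p" "a \<le> d"
  shows "poly_le d p"
proof -
  obtain c where c: "p = (\<lambda>x. \<Sum>\<alpha>\<in>exps_le a. c \<alpha> * monomial_fun \<alpha> x)" using assms(1) poly_le_def by blast
  have "exps_le a \<subseteq> (exps_le d :: ('a \<Rightarrow> nat) set)" using assms(2) by (auto simp: exps_le_def)
  then show ?thesis unfolding c by (intro poly_le_subset finite_exps_le)
qed

lemma poly_le_zero: "poly_le d (\<lambda>x. 0)"
  using poly_le_subset[of "{}" d] by simp

lemma poly_le_sum:
  assumes "finite I" "\<And>i. i \<in> I \<Longrightarrow> poly_le d (f i)"
  shows "poly_le d (\<lambda>x. \<Sum>i\<in>I. f i x)"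
  using assms by (induction I rule: finite_induct) (auto intro: poly_le_zero poly_le_add)

lemma monomial_mult: "monomial_fun (\<alpha>::'n::finite\<Rightarrow>nat) x * monomial_fun \<beta> x = monomial_fun (\<lambda>i. \<alpha> i + \<beta> i) x"
  by (simp add: monomial_fun_def prod.distrib power_add)
lemma dummy_x: "monomial_fun \<alpha> x * monomial_fun \<beta> x = monomial_fun (\<lambda>i. \<alpha> i + \<beta> i) x"
  by (simp add: monomial_fun_def prod.distrib power_add)

lemma poly_le_monomial:
  assumes "(\<Sum>i\<in>UNIV. \<gamma> i) \<le> d"
  shows "poly_le d (\<lambda>x. a * monomial_fun \<gamma> x)"
  using poly_le_subset[of "{\<gamma>}" d "\<lambda>_. a"] assms by (simp add: exps_le_def)

lemma poly_le_mult:
  fixes p q :: "real^'n::finite \<Rightarrow> real"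
  assumes "poly_le a p" "poly_le b q" "a + b \<le> d"
  shows "poly_le d (\<lambda>x. p x * q x)"
proof -
  obtain c where c: "p = (\<lambda>x. \<Sum>\<alpha>\<in>exps_le a. c \<alpha> * monomial_fun \<alpha> x)" using assms(1) poly_le_def by blast
  obtain e where e: "q = (\<lambda>x. \<Sum>\<alpha>\<in>exps_le b. e \<alpha> * monomial_fun \<alpha> x)" using assms(2) poly_le_def by blast
  have eq: "(\<lambda>x. p x * q x) = (\<lambda>x. \<Sum>\<alpha>\<in>exps_le a. \<Sum>\<beta>\<in>exps_le b. (c \<alpha> * e \<beta>) * monomial_fun (\<lambda>i. \<alpha> i + \<beta> i) x)"
    by (simp add: c e sum_product monomial_mult[symmetric] mult_ac)
  show ?thesis unfolding eq
  proof (intro poly_le_sum finite_exps_le)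
    fix \<alpha> \<beta> :: "'n \<Rightarrow> nat" assume "\<alpha> \<in> exps_le a" "\<beta> \<in> exps_le b"
    then have "(\<Sum>i\<in>UNIV. \<alpha> i + \<beta> i) \<le> d" using assms(3) by (simp add: exps_le_def sum.distrib)
    then show "poly_le d (\<lambda>x. c \<alpha> * e \<beta> * monomial_fun (\<lambda>i. \<alpha> i + \<beta> i) x)"
      by (rule poly_le_monomial)
  qed
qed

lemma poly_le_const: "poly_le d (\<lambda>x::real^'n::finite. a)"
  using poly_le_monomial[of "\<lambda>_::'n. 0" d a] by (simp add: monomial_fun_def)

lemma poly_le_coord:
  assumes "1 \<le> d"
  shows "poly_le d (\<lambda>x::real^'n::finite. x $ i)"
proof -
  have "monomial_fun (\<lambda>j. if j = i then 1 else 0) x = x $ i" for x :: "real^'n"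
  proof -
    have "(\<Prod>j\<in>UNIV. (x $ j) ^ (if j = i then 1 else 0)) = (\<Prod>j\<in>UNIV. if j = i then x $ j else 1)"
      by (rule prod.cong) auto
    then show ?thesis by (simp add: monomial_fun_def)
  qed
  then show ?thesis using poly_le_monomial[of "\<lambda>j. if j = i then 1 else 0" d 1] assms by simp
qed


definition qf :: "'k set \<Rightarrow> ('k \<Rightarrow> 'k \<Rightarrow> real) \<Rightarrow> ('k \<Rightarrow> real) \<Rightarrow> real" where
  "qf S Q u = (\<Sum>p\<in>S. \<Sum>q\<in>S. u p * Q p q * u q)"

lemma qf_insert:
  assumes "finite S" "a \<notin> S"
  shows "qf (insert a S) Q u = Q a a * (u a)^2 + u a * (\<Sum>q\<in>S. (Q a q + Q q a) * u q) + qf S Q u"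
proof -
  have "qf (insert a S) Q u = u a * Q a a * u a + (\<Sum>q\<in>S. u a * Q a q * u q)
     + (\<Sum>p\<in>S. u p * Q p a * u a) + qf S Q u"
    using assms by (simp add: qf_def sum.insert sum.distrib algebra_simps)
  also have "\<dots> = Q a a * (u a)^2 + u a * (\<Sum>q\<in>S. (Q a q + Q q a) * u q) + qf S Q u"
    by (simp add: sum_distrib_left sum.distrib algebra_simps power2_eq_square)
  finally show ?thesis .
qed

lemma qf_upd:
  assumes "a \<notin> S"
  shows "qf S Q (u(a := t)) = qf S Q u" "(\<Sum>q\<in>S. b q * (u(a:=t)) q) = (\<Sum>q\<in>S. b q * u q)"
  using assms unfolding qf_def
  by (auto intro!: sum.cong) 

lemma lin_upd:
  fixes w u :: "'k \<Rightarrow> real"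
  assumes "finite S" "a \<notin> S"
  shows "(\<Sum>p\<in>insert a S. (if p = a then 0 else w p) * u p) = (\<Sum>p\<in>S. w p * u p)"
proof -
  have "(\<Sum>p\<in>S. (if p = a then 0 else w p) * u p) = (\<Sum>p\<in>S. w p * u p)"
    using assms by (intro sum.cong) auto
  then show ?thesis using assms by simp
qed

lemma sos:
  assumes "finite S"
  shows "(\<forall>u. 0 \<le> qf S Q u) \<Longrightarrow> \<exists>ws. \<forall>u. qf S Q u = (\<Sum>w\<leftarrow>ws. (\<Sum>p\<in>S. w p * u p)^2)"
  using assms
proof (induction S arbitrary: Q rule: finite_induct)
  case empty
  then show ?case by (intro exI[where x="[]"]) (simp add: qf_def)
next
  case (insert a S)
  define b where "b q = Q a q + Q q a" for q
  define L where "L u = (\<Sum>q\<in>S. b q * u q)" for u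
  have qi: "qf (insert a S) Q u = Q a a * (u a)^2 + u a * L u + qf S Q u" for u
    using qf_insert[OF insert(1,2)] by (simp add: L_def b_def)
  have Lupd: "L (u(a:=t)) = L u" for u t unfolding L_def by (rule qf_upd(2)[OF insert(2)])
  have qupd: "qf S Q (u(a:=t)) = qf S Q u" for u t by (rule qf_upd(1)[OF insert(2)])
  have lift: "\<exists>ws'. \<forall>u. (\<Sum>w\<leftarrow>ws'. (\<Sum>p\<in>insert a S. w p * u p)^2) = (\<Sum>w\<leftarrow>ws. (\<Sum>p\<in>S. w p * u p)^2)" for ws :: "(_ \<Rightarrow> real) list"
  proof (intro exI[where x="map (\<lambda>w. w(a:=0)) ws"] allI)
    fix u show "(\<Sum>w\<leftarrow>map (\<lambda>w. w(a:=0)) ws. (\<Sum>p\<in>insert a S. w p * u p)^2) = (\<Sum>w\<leftarrow>ws. (\<Sum>p\<in>S. w p * u p)^2)"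
      unfolding map_map o_def
      by (intro arg_cong[where f=sum_list] map_cong refl) (simp only: fun_upd_apply lin_upd[OF insert(1,2)])
  qed
  have qaa: "Q a a \<ge> 0"
  proof -
    have "0 \<le> qf (insert a S) Q ((\<lambda>_. 0)(a := 1))" using insert(4) by blast
    also have "\<dots> = Q a a" unfolding qi by (simp add: Lupd qupd) (simp add: L_def qf_def)
    finally show ?thesis .
  qed
  show ?case
  proof (cases "Q a a = 0")
    case True
    have L0: "L u = 0" for u
    proof (rule ccontr)
      assume ne: "L u \<noteq> 0"
      define t where "t = - (qf S Q u + 1) / L u"
      have "0 \<le> qf (insert a S) Q (u(a:=t))" using insert(4) by blast
      also have "\<dots> = t * L u + qf S Q u" unfolding qi using True by (simp add: Lupd qupd)
      also have "\<dots> = -1" using ne by (simp add: t_def)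
      finally show False by simp
    qed
    have "\<forall>u. 0 \<le> qf S Q u"
    proof
      fix u
      have "0 \<le> qf (insert a S) Q u" using insert(4) by blast
      then show "0 \<le> qf S Q u" unfolding qi using True L0 by simp
    qed
    then obtain ws where ws: "\<forall>u. qf S Q u = (\<Sum>w\<leftarrow>ws. (\<Sum>p\<in>S. w p * u p)^2)" using insert(3) by blast
    obtain ws' where "\<forall>u. (\<Sum>w\<leftarrow>ws'. (\<Sum>p\<in>insert a S. w p * u p)^2) = (\<Sum>w\<leftarrow>ws. (\<Sum>p\<in>S. w p * u p)^2)"
      using lift by blast
    then show ?thesis using ws qi True L0 by (intro exI[where x=ws']) auto
  next
    case False
    define c where "c = Q a a"
    have c: "c > 0" using False qaa c_def by simp
    define Q' where "Q' p q = Q p q - b p * b q / (4*c)" for p q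
    have q': "qf S Q' u = qf S Q u - (L u)^2 / (4*c)" for u
    proof -
      have "(\<Sum>p\<in>S. \<Sum>q\<in>S. u p * (b p * b q / (4*c)) * u q) = (L u)^2 / (4*c)"
        by (simp add: L_def power2_eq_square sum_product sum_divide_distrib mult_ac)
      then show ?thesis by (simp add: qf_def Q'_def right_diff_distrib left_diff_distrib sum_subtractf)
    qed
    have "\<forall>u. 0 \<le> qf S Q' u"
    proof
      fix u
      define t where "t = - L u / (2*c)"
      have "0 \<le> qf (insert a S) Q (u(a:=t))" using insert(4) by blast
      also have "\<dots> = c * t^2 + t * L u + qf S Q u" unfolding qi by (simp add: Lupd qupd c_def)
      also have "\<dots> = qf S Q' u" using c by (simp add: q' t_def power2_eq_square field_simps)
      finally show "0 \<le> qf S Q' u" .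
    qed
    then obtain ws where ws: "\<forall>u. qf S Q' u = (\<Sum>w\<leftarrow>ws. (\<Sum>p\<in>S. w p * u p)^2)" using insert(3) by blast
    obtain ws' where ws': "\<forall>u. (\<Sum>w\<leftarrow>ws'. (\<Sum>p\<in>insert a S. w p * u p)^2) = (\<Sum>w\<leftarrow>ws. (\<Sum>p\<in>S. w p * u p)^2)"
      using lift by blast
    define w0 where "w0 p = (if p = a then sqrt c else b p / (2 * sqrt c))" for p
    have w0: "(\<Sum>p\<in>insert a S. w0 p * u p) = sqrt c * u a + L u / (2 * sqrt c)" for u
    proof -
      have "(\<Sum>p\<in>S. w0 p * u p) = (\<Sum>p\<in>S. b p * u p / (2 * sqrt c))"
        using insert(2) by (intro sum.cong) (auto simp: w0_def)
      then show ?thesis using insert(1,2) by (simp add: w0_def L_def sum_divide_distrib)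
    qed
    show ?thesis
    proof (intro exI[where x="w0 # ws'"] allI)
      fix u
      have sq: "(sqrt c * u a + L u / (2 * sqrt c))^2 = c * (u a)^2 + u a * L u + (L u)^2 / (4*c)"
        using c by (simp add: power2_sum power_mult_distrib power_divide field_simps)
      show "qf (insert a S) Q u = (\<Sum>w\<leftarrow>w0 # ws'. (\<Sum>p\<in>insert a S. w p * u p)^2)"
      proof -
        have "qf (insert a S) Q u = c*(u a)^2 + u a * L u + qf S Q u" by (simp add: qi c_def)
        also have "\<dots> = (sqrt c * u a + L u / (2 * sqrt c))^2 + qf S Q' u" by (simp add: sq q')
        also have "\<dots> = (\<Sum>w\<leftarrow>w0 # ws'. (\<Sum>p\<in>insert a S. w p * u p)^2)"
          using ws ws' by (simp add: w0)
        finally show ?thesis .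
      qed
    qed
  qed
qed


lemma qf_lin:
  "qf S (\<lambda>p q. a * Q1 p q - (\<Sum>i\<in>I. Q2 i p q)) u = a * qf S Q1 u - (\<Sum>i\<in>I. qf S (Q2 i) u)"
proof -
  have "qf S (\<lambda>p q. a * Q1 p q - (\<Sum>i\<in>I. Q2 i p q)) u =
        (\<Sum>p\<in>S. \<Sum>q\<in>S. a * (u p * Q1 p q * u q) - (\<Sum>i\<in>I. u p * Q2 i p q * u q))"
    unfolding qf_def by (intro sum.cong refl) (simp add: algebra_simps sum_distrib_left sum_distrib_right)
  also have "\<dots> = a * qf S Q1 u - (\<Sum>p\<in>S. \<Sum>q\<in>S. \<Sum>i\<in>I. u p * Q2 i p q * u q)"
    by (simp add: sum_subtractf sum_distrib_left qf_def)
  also have "(\<Sum>p\<in>S. \<Sum>q\<in>S. \<Sum>i\<in>I. u p * Q2 i p q * u q) = (\<Sum>i\<in>I. qf S (Q2 i) u)"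
    unfolding qf_def by (subst sum.swap) (simp add: sum.swap[of _ S I])
  finally show ?thesis .
qed

lemma inner_qf: "(u::real^'k::finite) \<bullet> (P *v u) = qf UNIV (\<lambda>p q. P $ p $ q) (\<lambda>p. u $ p)"
  by (simp add: qf_def inner_vec_def matrix_vector_mult_def sum_distrib_left mult_ac)

lemma quad_expand: "(x::real^'n::finite) \<bullet> (B *v x) = (\<Sum>i\<in>UNIV. \<Sum>j\<in>UNIV. x $ i * B $ i $ j * x $ j)"
  by (simp add: inner_vec_def matrix_vector_mult_def sum_distrib_left mult_ac)

lemma qf_kron:
  fixes x :: "real^'n::finite"
  shows "qf UNIV (\<lambda>p q. kron B B $ p $ q) (\<lambda>p. tensor2 x $ p) = (x \<bullet> (B *v x))^2"
proof -
  have "qf UNIV (\<lambda>p q. kron B B $ p $ q) (\<lambda>p. tensor2 x $ p) =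
     (\<Sum>p\<in>UNIV. \<Sum>q\<in>UNIV. (x $ fst p * B $ fst p $ fst q * x $ fst q) * (x $ snd p * B $ snd p $ snd q * x $ snd q))"
    unfolding qf_def kron_def tensor2_def by (simp add: mult_ac)
  also have "\<dots> = (\<Sum>i1\<in>UNIV. \<Sum>i2\<in>UNIV. \<Sum>j1\<in>UNIV. \<Sum>j2\<in>UNIV.
         (x $ i1 * B $ i1 $ j1 * x $ j1) * (x $ i2 * B $ i2 $ j2 * x $ j2))"
    by (simp only: UNIV_Times_UNIV[symmetric] sum.cartesian_product' fst_conv snd_conv)
  also have "\<dots> = (x \<bullet> (B *v x))^2"
    by (simp add: quad_expand power2_eq_square sum_product)
  finally show ?thesis .
qed

lemma norm2_sum: "(norm (x::real^'n::finite))^2 = (\<Sum>i\<in>UNIV. (x $ i)^2)"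
  unfolding power2_norm_eq_inner by (simp add: inner_vec_def power2_eq_square)

lemma poly_quad: "poly_le 2 (\<lambda>x::real^'n::finite. x \<bullet> (B *v x))"
  unfolding quad_expand
proof (intro poly_le_sum finite_UNIV)
  fix i j
  have "poly_le 1 (\<lambda>x::real^'n. x $ i * B $ i $ j)"
    by (rule poly_le_mult[where a=1 and b=0]) (auto intro: poly_le_coord poly_le_const)
  then show "poly_le 2 (\<lambda>x::real^'n. x $ i * B $ i $ j * x $ j)"
    by (rule poly_le_mult[where a=1 and b=1]) (auto intro: poly_le_coord)
qed auto


context
  fixes E :: "(real^'n::finite \<Rightarrow> real) \<Rightarrow> real"
  assumes PE: "pseudo_expectation 4 E"
begin

lemma E_add: "poly_le 4 p \<Longrightarrow> poly_le 4 q \<Longrightarrow> E (\<lambda>x. p x + q x) = E p + E q"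
  using PE unfolding pseudo_expectation_def by blast

lemma E_scale: "poly_le 4 p \<Longrightarrow> E (\<lambda>x. c * p x) = c * E p"
  using PE unfolding pseudo_expectation_def by blast

lemma E_one: "E (\<lambda>x. 1) = 1"
  using PE unfolding pseudo_expectation_def by blast

lemma E_sq: "poly_le 2 p \<Longrightarrow> E (\<lambda>x. (p x)^2) \<ge> 0"
  using PE unfolding pseudo_expectation_def by auto

lemma E_zero: "E (\<lambda>x. 0) = 0"
  using E_scale[OF poly_le_const, of 0 1] by simp

lemma E_sum: "finite I \<Longrightarrow> (\<And>i. i \<in> I \<Longrightarrow> poly_le 4 (f i)) \<Longrightarrow> E (\<lambda>x. \<Sum>i\<in>I. f i x) = (\<Sum>i\<in>I. E (f i))"
proof (induction I rule: finite_induct)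
  case empty then show ?case by (simp add: E_zero)
next
  case (insert a I)
  have "E (\<lambda>x. \<Sum>i\<in>insert a I. f i x) = E (\<lambda>x. f a x + (\<Sum>i\<in>I. f i x))"
    using insert(1,2) by simp
  also have "\<dots> = E (f a) + E (\<lambda>x. \<Sum>i\<in>I. f i x)"
    using insert by (intro E_add[of "f a", unfolded eta_contract_eq]) (auto intro: poly_le_sum)
  finally show ?case using insert by simp
qed

lemma E_sum_sq: "finite I \<Longrightarrow> (\<And>i. i \<in> I \<Longrightarrow> poly_le 2 (h i)) \<Longrightarrow> E (\<lambda>x. \<Sum>i\<in>I. (h i x)^2) \<ge> 0"
proof -
  assume I: "finite I" and h: "\<And>i. i \<in> I \<Longrightarrow> poly_le 2 (h i)"
  have "E (\<lambda>x. \<Sum>i\<in>I. (h i x)^2) = (\<Sum>i\<in>I. E (\<lambda>x. (h i x)^2))"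
    using I h by (intro E_sum) (auto simp: power2_eq_square intro: poly_le_mult[where a=2 and b=2])
  also have "\<dots> \<ge> 0" using h by (intro sum_nonneg E_sq) auto
  finally show ?thesis .
qed

lemma E_lin3:
  assumes "poly_le 4 p" "poly_le 4 q" "poly_le 4 r"
  shows "E (\<lambda>x. a * p x + b * q x + c * r x) = a * E p + b * E q + c * E r"
proof -
  have "E (\<lambda>x. a * p x + b * q x + c * r x) = E (\<lambda>x. a * p x + b * q x) + E (\<lambda>x. c * r x)"
    using assms by (intro E_add[of "\<lambda>x. a * p x + b * q x" "\<lambda>x. c * r x"]) (auto intro: poly_le_add poly_le_scale)
  also have "E (\<lambda>x. a * p x + b * q x) = E (\<lambda>x. a * p x) + E (\<lambda>x. b * q x)"
    using assms by (intro E_add[of "\<lambda>x. a * p x" "\<lambda>x. b * q x"]) (auto intro: poly_le_scale)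
  finally show ?thesis using assms by (simp add: E_scale)
qed

lemma E_psd:
  assumes "\<forall>u. 0 \<le> qf UNIV Q u"
  shows "E (\<lambda>x. qf UNIV Q (\<lambda>p. tensor2 x $ p)) \<ge> 0"
proof -
  obtain ws where ws: "\<forall>u. qf UNIV Q u = (\<Sum>w\<leftarrow>ws. (\<Sum>p\<in>UNIV. w p * u p)^2)"
    using sos[of UNIV Q] assms by auto
  define h where "h k x = (\<Sum>p\<in>UNIV. (ws ! k) p * tensor2 x $ p)" for k and x :: "real^'n"
  have "(\<lambda>x. qf UNIV Q (\<lambda>p. tensor2 x $ p)) = (\<lambda>x. \<Sum>k\<in>{0..<length ws}. (h k x)^2)"
    by (rule ext) (simp add: ws h_def sum_list_sum_nth)
  moreover have "poly_le 2 (h k)" for k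
    unfolding h_def tensor2_def
  proof (intro poly_le_sum finite_UNIV)
    fix p :: "'n \<times> 'n"
    have "poly_le 2 (\<lambda>x::real^'n. x $ fst p * x $ snd p)"
      by (rule poly_le_mult[where a=1 and b=1]) (auto intro: poly_le_coord)
    then show "poly_le 2 (\<lambda>x::real^'n. (ws ! k) p * (\<chi> p. x $ fst p * x $ snd p) $ p)"
      by (simp add: poly_le_scale)
  qed auto
  ultimately show ?thesis using E_sum_sq[of "{0..<length ws}" h] by simp
qed

end


lemma sum_sq_expand:
  "(\<Sum>i\<in>I. (t * a i - b i)^2) = (t::real)^2 * (\<Sum>i\<in>I. (a i)^2) + (-2*t) * (\<Sum>i\<in>I. a i * b i) + 1 * (\<Sum>i\<in>I. (b i)^2)"
proof -
  have "(\<Sum>i\<in>I. (t * a i - b i)^2) = (\<Sum>i\<in>I. t^2 * (a i)^2 + (-2*t) * (a i * b i) + 1*(b i)^2)"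
    by (intro sum.cong) (simp_all add: power2_eq_square algebra_simps)
  then show ?thesis by (simp only: sum.distrib sum_distrib_left)
qed

theorem mainTheorem1:
  fixes f :: "real^'n::finite \<Rightarrow> real" and lam :: real
  assumes "homog_poly 3 f"
    and "lam > 0"
    and "lambda_bounded lam f"
  shows "(\<forall>v. norm v = 1 \<longrightarrow> f v \<le> lam) \<and>
         (\<forall>E. pseudo_expectation 4 E \<longrightarrow>
               E f \<le> lam * (E (\<lambda>x. (norm x)^4)) powr (3/4))"
proof -
  obtain A :: "'n \<Rightarrow> real^'n^'n" and M :: "real^('n \<times> 'n)^('n \<times> 'n)" where
    fA: "\<forall>x. f x = (\<Sum>i\<in>UNIV. x $ i * (x \<bullet> (A i *v x)))" and
    M: "matrix_rep_norm4 M" and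
    psd: "\<forall>u. u \<bullet> ((lam^2 *\<^sub>R M - (\<Sum>i\<in>UNIV. kron (A i) (A i))) *v u) \<ge> 0"
    using assms(3) unfolding lambda_bounded_def by blast
  define g where "g i x = x \<bullet> (A i *v x)" for i and x :: "real^'n"
  define G where "G x = (\<Sum>i\<in>UNIV. (g i x)^2)" for x :: "real^'n"
  define n2 where "n2 x = (\<Sum>i\<in>UNIV. (x $ i)^2)" for x :: "real^'n"
  define Qm where "Qm p q = (lam^2 *\<^sub>R M - (\<Sum>i\<in>UNIV. kron (A i) (A i))) $ p $ q" for p q
  have f_eq: "f = (\<lambda>x. \<Sum>i\<in>UNIV. x $ i * g i x)" using fA by (auto simp: g_def)
  have Qm_eq: "Qm = (\<lambda>p q. lam^2 * M $ p $ q - (\<Sum>i\<in>UNIV. kron (A i) (A i) $ p $ q))"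
    by (intro ext) (simp add: Qm_def sum_component)
  have key: "qf UNIV Qm (\<lambda>p. tensor2 x $ p) = lam^2 * (norm x)^4 - G x" for x
  proof -
    have "qf UNIV (\<lambda>p q. M $ p $ q) (\<lambda>p. tensor2 x $ p) = (norm x)^4"
      using M unfolding matrix_rep_norm4_def inner_qf by simp
    then show ?thesis unfolding Qm_eq qf_lin by (simp add: qf_kron G_def g_def)
  qed
  have psdQ: "\<forall>u. 0 \<le> qf UNIV Qm u"
  proof
    fix u :: "'n \<times> 'n \<Rightarrow> real"
    have h: "0 \<le> qf UNIV (\<lambda>p q. (lam^2 *\<^sub>R M - (\<Sum>i\<in>UNIV. kron (A i) (A i))) $ p $ q) (\<lambda>p. vec_lambda u $ p)"
      using psd unfolding inner_qf by blast
    have e1: "(\<lambda>p q. (lam^2 *\<^sub>R M - (\<Sum>i\<in>UNIV. kron (A i) (A i))) $ p $ q) = Qm"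
      by (intro ext) (simp only: Qm_def)
    have e2: "(\<lambda>p. vec_lambda u $ p) = u" by (intro ext) (simp only: vec_lambda_beta)
    show "0 \<le> qf UNIV Qm u" using h unfolding e1 e2 .

  qed
  have n2_norm: "n2 x = (norm x)^2" for x unfolding n2_def norm2_sum ..
  have expand: "(\<Sum>i\<in>UNIV. (t * x $ i - g i x)^2) = t^2 * n2 x + (-2*t) * f x + 1 * G x" for t x
    unfolding sum_sq_expand n2_def G_def f_eq ..
  have part1: "\<forall>v. norm v = 1 \<longrightarrow> f v \<le> lam"
  proof (intro allI impI)
    fix v :: "real^'n" assume nv: "norm v = 1"
    have G1: "G v \<le> lam^2" using psdQ[rule_format, of "\<lambda>p. tensor2 v $ p"] key[of v] nv by simp
    have "0 \<le> (\<Sum>i\<in>UNIV. (lam * v $ i - g i v)^2)" by (intro sum_nonneg) auto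
    then have "0 \<le> lam^2 - 2 * lam * f v + G v" unfolding expand n2_norm nv by simp
    then have "2 * lam * f v \<le> 2 * lam * lam" using G1 by (simp add: power2_eq_square)
    then show "f v \<le> lam" using assms(2) by simp
  qed
  have part2: "E f \<le> lam * (E (\<lambda>x. (norm x)^4)) powr (3/4)" if PE: "pseudo_expectation 4 E" for E
  proof -
    have pn2: "poly_le 2 n2" unfolding n2_def
      by (intro poly_le_sum) (auto simp: power2_eq_square intro: poly_le_mult[where a=1 and b=1] poly_le_coord)
    have pg: "poly_le 2 (g i)" for i unfolding g_def by (rule poly_quad)
    have pf: "poly_le 4 f" unfolding f_eq
      by (intro poly_le_sum) (auto intro: poly_le_mult[where a=1 and b=2] poly_le_coord pg)
    have pG: "poly_le 4 G" unfolding G_def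
      by (intro poly_le_sum) (auto simp: power2_eq_square intro: poly_le_mult[where a=2 and b=2] pg)
    have N4eq: "(\<lambda>x::real^'n. (norm x)^4) = (\<lambda>x. (n2 x)^2)" by (auto simp: n2_norm)
    have pN4: "poly_le 4 (\<lambda>x::real^'n. (norm x)^4)" unfolding N4eq
      by (simp add: power2_eq_square poly_le_mult[where a=2 and b=2] pn2)
    have pn2': "poly_le 4 n2" using pn2 by (rule poly_le_mono) simp
    define m where "m = E (\<lambda>x. (norm x)^4)"
    define a where "a = E n2"
    define b where "b = E G"
    define F where "F = E f"
    have m0: "m \<ge> 0" unfolding m_def N4eq using E_sq[OF PE pn2] .
    have h1: "b \<le> lam^2 * m"
    proof -
      have "0 \<le> E (\<lambda>x. qf UNIV Qm (\<lambda>p. tensor2 x $ p))" by (rule E_psd[OF PE psdQ])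
      also have "(\<lambda>x. qf UNIV Qm (\<lambda>p. tensor2 x $ p)) = (\<lambda>x. lam^2 * (norm x)^4 + (-1) * G x + 0 * n2 x)"
        by (rule ext) (simp add: key)
      also have "E \<dots> = lam^2 * m + (-1) * b + 0 * a"
        unfolding m_def b_def a_def by (rule E_lin3[OF PE pN4 pG pn2'])
      finally show ?thesis by simp
    qed
    have h2: "0 \<le> t^2 * a + (-2*t) * F + b" for t
    proof -
      have "0 \<le> E (\<lambda>x. \<Sum>i\<in>UNIV. (t * x $ i - g i x)^2)"
      proof (rule E_sum_sq[OF PE])
        fix i
        have "poly_le 2 (\<lambda>x. t * x $ i + (-1) * g i x)"
          by (intro poly_le_add poly_le_scale pg poly_le_coord) simp
        then show "poly_le 2 (\<lambda>x. t * x $ i - g i x)" by simp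
      qed simp
      also have "(\<lambda>x. \<Sum>i\<in>UNIV. (t * x $ i - g i x)^2) = (\<lambda>x. t^2 * n2 x + (-2*t) * f x + 1 * G x)"
        by (rule ext) (rule expand)
      also have "E \<dots> = t^2 * a + (-2*t) * F + 1 * b"
        unfolding a_def b_def F_def by (rule E_lin3[OF PE pn2' pf pG])
      finally show ?thesis by simp
    qed
    have h3: "0 \<le> m + (-2*z) * a + z^2" for z
    proof -
      have "poly_le 2 (\<lambda>x. n2 x - z)" 
        using poly_le_add[OF pn2 poly_le_const[of 2 "-z"]] by simp
      then have "0 \<le> E (\<lambda>x. (n2 x - z)^2)" by (rule E_sq[OF PE])
      also have "(\<lambda>x. (n2 x - z)^2) = (\<lambda>x. 1 * (norm x)^4 + (-2*z) * n2 x + z^2 * 1)"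
        by (rule ext) (simp add: power2_diff n2_norm power2_eq_square power4_eq_xxxx algebra_simps)
      also have "E \<dots> = 1 * m + (-2*z) * a + z^2 * 1"
        unfolding m_def a_def using E_lin3[OF PE pN4 pn2' poly_le_const, of 1 "-2*z" "z^2" 1]
        by (simp add: E_one[OF PE])
      finally show ?thesis by simp
    qed
    show ?thesis
    proof (cases "m = 0")
      case True
      have a0: "a \<le> 0"
      proof (rule ccontr)
        assume "\<not> a \<le> 0"
        then have "a > 0" by simp
        with h3[of a] True show False by (simp add: power2_eq_square) (metis mult_pos_pos not_le)
      qed
      have "b \<le> 0" using h1 True by simp
      then have "F \<le> 0" using h2[of 1] a0 by simp
      then show ?thesis using True by (simp add: F_def m_def)
    next
      case False
      then have mpos: "m > 0" using m0 by simp
      define r where "r = m powr (1/4)"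
      have rpos: "r > 0" using mpos by (simp add: r_def)
      have r4: "r^4 = m" using mpos by (simp add: r_def powr_power)
      have r3: "r^3 = m powr (3/4)" using mpos by (simp add: r_def powr_power)
      have "0 \<le> r^4 + (-2*r^2) * a + (r^2)^2" using h3[of "r^2"] r4 by simp
      then have "(2 * r^2) * a \<le> (2 * r^2) * r^2" by (simp add: power2_eq_square power4_eq_xxxx algebra_simps)
      then have ar: "a \<le> r^2" by (rule mult_left_le_imp_le) (use rpos in simp)
      have "lam^2 * r^2 * a \<le> lam^2 * r^2 * r^2" using ar by (intro mult_left_mono) auto
      moreover have "0 \<le> (lam*r)^2 * a + (-2*(lam*r)) * F + b" by (rule h2)
      ultimately have "2 * (lam * r) * F \<le> 2 * (lam * r) * (lam * r^3)"
        using h1 r4 by (simp add: power2_eq_square power3_eq_cube power4_eq_xxxx algebra_simps)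
      then have "F \<le> lam * r^3" using rpos assms(2) by simp
      then show ?thesis using r3 by (simp add: F_def m_def)
    qed
  qed
  show ?thesis using part1 part2 by blast
qed

end
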